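(* Let $L, L_{xy},\mu_y, t, r>0$ with $\mu_y\leq L$. Then there exist $n,m$, a function $F\in\mathcal{F}(L, L, L_{xy}, 0, \mu_y)$ on $\mathbb{R}^n\times\mathbb{R}^m$ with a unique saddle point $(x^\star, y^\star)$, and a point $(x^1, y^1)$ with $\|x^1-x^\star\|^2+\|y^1-y^\star\|^2=r^2$, such that the point $x^{2}=x^1-t\nabla_x F(x^1, y^1)$, $y^{2}=y^1+t\nabla_y F(x^1, y^1)$ satisfies $$ \|x^2-x^\star\|^2+\|y^2-y^\star\|^2\geq \alpha\left(\|x^1-x^\star\|^2+\|y^1-y^\star\|^2\right) $$ for some $\alpha\geq 1$.
   Context: $\mathcal{F}(L_x, L_y, L_{xy}, \mu_x, \mu_y)$ (with $\mu_x,\mu_y\ge 0$) denotes the set of differentiable $F:\mathbb{R}^n\times\mathbb{R}^m\to\mathbb{R}$ such that for all $x,x_1,x_2,y,y_1,y_2$: $\|\nabla_x F(x_2, y)-\nabla_x F(x_1, y)\|\leq L_x\|x_2-x_1\|$; $\|\nabla_y F(x, y_2)-\nabla_y F(x, y_1)\|\leq L_y\|y_2-y_1\|$; $\|\nabla_x F(x, y_2)-\nabla_x F(x, y_1)\|\leq L_{xy}\|y_2-y_1\|$; $\|\nabla_y F(x_2, y)-\nabla_y F(x_1, y)\|\leq L_{xy}\|x_2-x_1\|$; $F(\cdot, y)-\tfrac{\mu_x}{2}\|\cdot\|^2$ convex for every $y$ and $F(x,\cdot)+\tfrac{\mu_y}{2}\|\cdot\|^2$ concave for every $x$ (so $\mu_x=0$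 means merely convex in $x$). A saddle point is $(x^\star,y^\star)$ with $F(x^\star, y)\leq F(x^\star, y^\star)\leq F(x, y^\star)$ for all $x,y$. *)

theory Defs
  imports "HOL-Analysis.Analysis"
begin

definition grad_x :: "('a::euclidean_space \<times> 'b::euclidean_space \<Rightarrow> real) \<Rightarrow> 'a \<Rightarrow> 'b \<Rightarrow> 'a" where
  "grad_x F x y = (THE g. ((\<lambda>u. F (u, y)) has_derivative (\<lambda>h. g \<bullet> h)) (at x))"

definition grad_y :: "('a::euclidean_space \<times> 'b::euclidean_space \<Rightarrow> real) \<Rightarrow> 'a \<Rightarrow> 'b \<Rightarrow> 'b" where
  "grad_y F x y = (THE g. ((\<lambda>v. F (x, v)) has_derivative (\<lambda>h. g \<bullet> h)) (at y))"

definition fun_class ::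
  "('a::euclidean_space \<times> 'b::euclidean_space \<Rightarrow> real) \<Rightarrow> real \<Rightarrow> real \<Rightarrow> real \<Rightarrow> real \<Rightarrow> real \<Rightarrow> bool" where
  "fun_class F Lx Ly Lxy mux muy \<longleftrightarrow>
     mux \<ge> 0 \<and> muy \<ge> 0 \<and>
     (\<forall>z. F differentiable (at z)) \<and>
     (\<forall>x1 x2 y. norm (grad_x F x2 y - grad_x F x1 y) \<le> Lx * norm (x2 - x1)) \<and>
     (\<forall>x y1 y2. norm (grad_y F x y2 - grad_y F x y1) \<le> Ly * norm (y2 - y1)) \<and>
     (\<forall>x y1 y2. norm (grad_x F x y2 - grad_x F x y1) \<le> Lxy * norm (y2 - y1)) \<and>
     (\<forall>x1 x2 y. norm (grad_y F x2 y - grad_y F x1 y) \<le> Lxy * norm (x2 - x1)) \<and>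
     (\<forall>y. convex_on UNIV (\<lambda>x. F (x, y) - mux / 2 * (norm x)\<^sup>2)) \<and>
     (\<forall>x. concave_on UNIV (\<lambda>y. F (x, y) + muy / 2 * (norm y)\<^sup>2))"

definition saddle_point :: "('a \<times> 'b \<Rightarrow> real) \<Rightarrow> 'a \<Rightarrow> 'b \<Rightarrow> bool" where
  "saddle_point F xs ys \<longleftrightarrow> (\<forall>x y. F (xs, y) \<le> F (xs, ys) \<and> F (xs, ys) \<le> F (x, ys))"

end

theory Submission
  imports Defs
begin

lemma grad_x_eq:
  assumes "((\<lambda>u. F (u, y)) has_derivative (\<lambda>h. g \<bullet> h)) (at x)"
  shows "grad_x F x y = g"
  unfolding grad_x_def
proof (rule the_equality)
  show "((\<lambda>u. F (u, y)) has_derivative (\<lambda>h. g \<bullet> h)) (at x)" by (rule assms)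
next
  fix g' assume "((\<lambda>u. F (u, y)) has_derivative (\<lambda>h. g' \<bullet> h)) (at x)"
  from has_derivative_unique[OF this assms] have "\<And>h. g' \<bullet> h = g \<bullet> h" by metis
  from this[of "g' - g"] have "(g' - g) \<bullet> (g' - g) = 0" by (simp add: inner_diff inner_commute)
  then show "g' = g" by simp
qed

lemma grad_y_eq:
  assumes "((\<lambda>v. F (x, v)) has_derivative (\<lambda>h. g \<bullet> h)) (at y)"
  shows "grad_y F x y = g"
  unfolding grad_y_def
proof (rule the_equality)
  show "((\<lambda>v. F (x, v)) has_derivative (\<lambda>h. g \<bullet> h)) (at y)" by (rule assms)
next
  fix g' assume "((\<lambda>v. F (x, v)) has_derivative (\<lambda>h. g' \<bullet> h)) (at y)"
  from has_derivative_unique[OF this assms] have "\<And>h. g' \<bullet> h = g \<bullet> h" by metis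
  from this[of "g' - g"] have "(g' - g) \<bullet> (g' - g) = 0" by (simp add: inner_diff inner_commute)
  then show "g' = g" by simp
qed

lemma convex_quad:
  fixes c :: "'a::real_inner"
  assumes "p \<ge> 0"
  shows "convex_on UNIV (\<lambda>x. p * (x \<bullet> x) + c \<bullet> x + d)"
  unfolding convex_on_def
proof (intro conjI ballI allI impI)
  fix x y :: 'a and u v :: real
  assume uv: "u \<ge> 0" "v \<ge> 0" "u + v = 1"
  have v: "v = 1 - u" using uv by simp
  have e: "(u *\<^sub>R x + v *\<^sub>R y) \<bullet> (u *\<^sub>R x + v *\<^sub>R y) = u * (x \<bullet> x) + v * (y \<bullet> y) - u * v * ((x - y) \<bullet> (x - y))"
    unfolding v by (simp add: inner_add inner_diff algebra_simps inner_commute power2_eq_square)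
  have nn: "0 \<le> p * (u * v * ((x - y) \<bullet> (x - y)))" using uv assms by simp
  have c: "c \<bullet> (u *\<^sub>R x + v *\<^sub>R y) = u * (c \<bullet> x) + v * (c \<bullet> y)" by (simp add: inner_add)
  have dd: "(u * (p * (x \<bullet> x) + c \<bullet> x + d) + v * (p * (y \<bullet> y) + c \<bullet> y + d)) -
     (p * ((u *\<^sub>R x + v *\<^sub>R y) \<bullet> (u *\<^sub>R x + v *\<^sub>R y)) + c \<bullet> (u *\<^sub>R x + v *\<^sub>R y) + d)
     = p * (u * v * ((x - y) \<bullet> (x - y))) + (u + v - 1) * d"
    unfolding e c by algebra
  show "p * ((u *\<^sub>R x + v *\<^sub>R y) \<bullet> (u *\<^sub>R x + v *\<^sub>R y)) + c \<bullet> (u *\<^sub>R x + v *\<^sub>R y) + d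
    \<le> u * (p * (x \<bullet> x) + c \<bullet> x + d) + v * (p * (y \<bullet> y) + c \<bullet> y + d)"
    using dd nn uv(3) by simp
qed simp

lemma concave_lin:
  fixes c :: "'a::real_inner"
  shows "concave_on UNIV (\<lambda>x. c \<bullet> x + d)"
  unfolding concave_on_def convex_on_def
proof (intro conjI ballI allI impI)
  fix x y :: 'a and u v :: real
  assume uv: "u \<ge> 0" "v \<ge> 0" "u + v = 1"
  have c: "c \<bullet> (u *\<^sub>R x + v *\<^sub>R y) = u * (c \<bullet> x) + v * (c \<bullet> y)" by (simp add: inner_add)
  have dd: "(u * - (c \<bullet> x + d) + v * - (c \<bullet> y + d)) - (- (c \<bullet> (u *\<^sub>R x + v *\<^sub>R y) + d))
     = (1 - (u + v)) * d"
    unfolding c by algebra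
  show "- (c \<bullet> (u *\<^sub>R x + v *\<^sub>R y) + d) \<le> u * - (c \<bullet> x + d) + v * - (c \<bullet> y + d)"
    using dd uv(3) by simp
qed simp

theorem proposition2p5:
  fixes L Lxy muy t r :: real
  assumes "L > 0" and "Lxy > 0" and "muy > 0" and "t > 0" and "r > 0" and "muy \<le> L"
  shows "\<exists>(F :: (real^'n) \<times> (real^'m) \<Rightarrow> real) xs ys x1 y1.
           fun_class F L L Lxy 0 muy \<and>
           saddle_point F xs ys \<and>
           (\<forall>a b. saddle_point F a b \<longrightarrow> a = xs \<and> b = ys) \<and>
           (norm (x1 - xs))\<^sup>2 + (norm (y1 - ys))\<^sup>2 = r\<^sup>2 \<and>
           (let x2 = x1 - t *\<^sub>R grad_x F x1 y1;
                y2 = y1 + t *\<^sub>R grad_y F x1 y1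
            in \<exists>\<alpha>\<ge>1. (norm (x2 - xs))\<^sup>2 + (norm (y2 - ys))\<^sup>2
                        \<ge> \<alpha> * ((norm (x1 - xs))\<^sup>2 + (norm (y1 - ys))\<^sup>2))"
proof -
  define k :: 'n where "k = undefined"
  define j :: 'm where "j = undefined"
  define a where "a = Lxy"
  define e where "e = min L (t * a^2 / 2)"
  define ek :: "real^'n" where "ek = axis k 1"
  define ej :: "real^'m" where "ej = axis j 1"
  define F :: "(real^'n) \<times> (real^'m) \<Rightarrow> real" where
    "F z = e/2*(fst z \<bullet> fst z) + a*(fst z \<bullet> ek)*(snd z \<bullet> ej) - muy/2*(snd z \<bullet> snd z)" for z
  have a0: "a > 0" using assms by (simp add: a_def)
  have e0: "e > 0" using assms a0 by (simp add: e_def)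
  have eL: "e \<le> L" and et: "e \<le> t * a^2 / 2" by (simp_all add: e_def)
  have ekn: "x \<bullet> ek = x $ k" for x by (simp add: ek_def inner_axis)
  have ejn: "y \<bullet> ej = y $ j" for y by (simp add: ej_def inner_axis)
  have gx: "grad_x F x y = e *\<^sub>R x + (a*(y \<bullet> ej)) *\<^sub>R ek" for x y
    apply (rule grad_x_eq) unfolding F_def fst_conv snd_conv
    by (auto intro!: derivative_eq_intros simp: fun_eq_iff algebra_simps inner_add inner_commute)
  have gy: "grad_y F x y = (a*(x \<bullet> ek)) *\<^sub>R ej - muy *\<^sub>R y" for x y
    apply (rule grad_y_eq) unfolding F_def fst_conv snd_conv
    by (auto intro!: derivative_eq_intros simp: fun_eq_iff algebra_simps inner_diff inner_add inner_commute)
  have diff: "F differentiable (at z)" for z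
    unfolding F_def differentiable_def by (rule exI, (rule derivative_intros)+)
  have fc: "fun_class F L L Lxy 0 muy"
    unfolding fun_class_def
  proof (intro conjI allI)
    fix x1 x2 :: "real^'n" and y :: "real^'m"
    have "grad_x F x2 y - grad_x F x1 y = e *\<^sub>R (x2 - x1)" by (simp add: gx algebra_simps)
    then show "norm (grad_x F x2 y - grad_x F x1 y) \<le> L * norm (x2 - x1)"
      using e0 eL by (simp add: mult_right_mono)
  next
    fix x :: "real^'n" and y1 y2 :: "real^'m"
    have "grad_y F x y2 - grad_y F x y1 = - (muy *\<^sub>R (y2 - y1))" by (simp add: gy algebra_simps)
    then show "norm (grad_y F x y2 - grad_y F x y1) \<le> L * norm (y2 - y1)"
      using assms by (simp add: mult_right_mono)
  next
    fix x :: "real^'n" and y1 y2 :: "real^'m"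
    have "grad_x F x y2 - grad_x F x y1 = (a * (y2 - y1) $ j) *\<^sub>R ek" by (simp add: gx ejn algebra_simps)
    then show "norm (grad_x F x y2 - grad_x F x y1) \<le> Lxy * norm (y2 - y1)"
      using a0 component_le_norm_cart[of "y2 - y1" j] by (simp add: ek_def a_def abs_mult mult_left_mono)
  next
    fix x1 x2 :: "real^'n" and y :: "real^'m"
    have "grad_y F x2 y - grad_y F x1 y = (a * (x2 - x1) $ k) *\<^sub>R ej" by (simp add: gy ekn algebra_simps)
    then show "norm (grad_y F x2 y - grad_y F x1 y) \<le> Lxy * norm (x2 - x1)"
      using a0 component_le_norm_cart[of "x2 - x1" k] by (simp add: ej_def a_def abs_mult mult_left_mono)
  next
    fix y :: "real^'m"
    have "(\<lambda>x. F (x, y) - 0 / 2 * (norm x)\<^sup>2) = (\<lambda>x. (e/2) * (x \<bullet> x) + ((a*(y \<bullet> ej)) *\<^sub>R ek) \<bullet> x + (- muy/2*(y \<bullet> y)))"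
      by (auto simp: F_def fun_eq_iff inner_commute)
    moreover have "convex_on UNIV (\<lambda>x. (e/2) * (x \<bullet> x) + ((a*(y \<bullet> ej)) *\<^sub>R ek) \<bullet> x + (- muy/2*(y \<bullet> y)))"
      by (rule convex_quad) (use e0 in simp)
    ultimately show "convex_on UNIV (\<lambda>x. F (x, y) - 0 / 2 * (norm x)\<^sup>2)"
      by (simp only:)
  next
    fix x :: "real^'n"
    have "(\<lambda>y. F (x, y) + muy / 2 * (norm y)\<^sup>2) = (\<lambda>y. ((a*(x \<bullet> ek)) *\<^sub>R ej) \<bullet> y + e/2*(x \<bullet> x))"
      by (auto simp: F_def fun_eq_iff inner_commute power2_norm_eq_inner)
    moreover have "concave_on UNIV (\<lambda>y. ((a*(x \<bullet> ek)) *\<^sub>R ej) \<bullet> y + e/2*(x \<bullet> x))"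
      by (rule concave_lin)
    ultimately show "concave_on UNIV (\<lambda>y. F (x, y) + muy / 2 * (norm y)\<^sup>2)"
      by (simp only:)
  qed (use assms diff in auto)
  have sp: "saddle_point F 0 0"
    unfolding saddle_point_def F_def using e0 assms by auto
  have un: "\<forall>p q. saddle_point F p q \<longrightarrow> p = 0 \<and> q = 0"
  proof (intro allI impI)
    fix p q assume "saddle_point F p q"
    then have "F (p, 0) \<le> F (p, q)" "F (p, q) \<le> F (0, q)" unfolding saddle_point_def by auto
    then have "e/2*(p \<bullet> p) + muy/2*(q \<bullet> q) \<le> 0" by (simp add: F_def)
    moreover have "p \<bullet> p \<ge> 0" "q \<bullet> q \<ge> 0" by auto
    ultimately have "p \<bullet> p = 0" "q \<bullet> q = 0" using e0 assms
      by (smt (verit) mult_nonneg_nonneg divide_pos_pos mult_pos_pos)+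
    then show "p = 0 \<and> q = 0" by simp
  qed
  define x1 :: "real^'n" where "x1 = r *\<^sub>R ek"
  have nx1: "(norm (x1 - 0))\<^sup>2 + (norm ((0::real^'m) - 0))\<^sup>2 = r\<^sup>2"
    using assms by (simp add: x1_def ek_def)
  have g1: "grad_x F x1 0 = e *\<^sub>R x1" by (simp add: gx)
  have g2: "grad_y F x1 0 = (a * r) *\<^sub>R ej" by (simp add: gy x1_def ek_def inner_axis)
  have x2: "x1 - t *\<^sub>R grad_x F x1 0 = ((1 - t*e) * r) *\<^sub>R ek" unfolding g1 by (simp add: x1_def algebra_simps)
  have y2: "0 + t *\<^sub>R grad_y F x1 0 = (t * a * r) *\<^sub>R ej" by (simp add: g2)
  have key: "((1 - t*e) * r)\<^sup>2 + (t * a * r)\<^sup>2 \<ge> r\<^sup>2"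
  proof -
    have h1: "t*e \<le> t*(t * a^2 / 2)" using et assms by (intro mult_left_mono) auto
    have h1': "t*(t * a^2 / 2) = (t*a)^2/2" by (simp add: power2_eq_square)
    have h2: "(1 - t*e)^2 = 1 - 2*(t*e) + (t*e)^2" by (simp add: power2_eq_square algebra_simps)
    have h3: "(t*e)^2 \<ge> 0" by simp
    have "(1 - t*e)\<^sup>2 + (t*a)\<^sup>2 \<ge> 1" using h1 h1' h2 h3 by linarith
    then have "((1 - t*e)\<^sup>2 + (t*a)\<^sup>2) * r\<^sup>2 \<ge> 1 * r\<^sup>2" by (rule mult_right_mono) simp
    then show ?thesis unfolding power_mult_distrib distrib_right by simp
  qed
  have n2: "(norm (((1 - t*e) * r) *\<^sub>R ek - 0))\<^sup>2 + (norm ((t * a * r) *\<^sub>R ej - 0))\<^sup>2 = ((1 - t*e) * r)\<^sup>2 + (t * a * r)\<^sup>2"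
    by (simp add: ek_def ej_def)
  have fin: "\<exists>\<alpha>\<ge>1. (norm (((1 - t*e) * r) *\<^sub>R ek - 0))\<^sup>2 + (norm ((t * a * r) *\<^sub>R ej - 0))\<^sup>2
       \<ge> \<alpha> * ((norm (x1 - 0))\<^sup>2 + (norm ((0::real^'m) - 0))\<^sup>2)"
    by (rule exI[of _ 1]) (simp only: n2 nx1 key mult_1 order_refl simp_thms)
  have L: "(let x2 = x1 - t *\<^sub>R grad_x F x1 0; y2 = (0::real^'m) + t *\<^sub>R grad_y F x1 0
            in \<exists>\<alpha>\<ge>1. (norm (x2 - 0))\<^sup>2 + (norm (y2 - 0))\<^sup>2
                        \<ge> \<alpha> * ((norm (x1 - 0))\<^sup>2 + (norm ((0::real^'m) - 0))\<^sup>2))"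
    unfolding Let_def x2 y2 by (rule fin)
  have G: "fun_class F L L Lxy 0 muy \<and>
           saddle_point F 0 0 \<and>
           (\<forall>a b. saddle_point F a b \<longrightarrow> a = 0 \<and> b = 0) \<and>
           (norm (x1 - 0))\<^sup>2 + (norm ((0::real^'m) - 0))\<^sup>2 = r\<^sup>2 \<and>
           (let x2 = x1 - t *\<^sub>R grad_x F x1 0; y2 = (0::real^'m) + t *\<^sub>R grad_y F x1 0
            in \<exists>\<alpha>\<ge>1. (norm (x2 - 0))\<^sup>2 + (norm (y2 - 0))\<^sup>2
                        \<ge> \<alpha> * ((norm (x1 - 0))\<^sup>2 + (norm ((0::real^'m) - 0))\<^sup>2))"
    by (rule conjI[OF fc conjI[OF sp conjI[OF un conjI[OF nx1 L]]]])
  show ?thesis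
    apply (rule exI)+
    apply (rule G)
    done
qed

end
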